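(* Let $u$ be a solution of the Degasperis–Procesi equation in the class $C^0([0,T);H^4(\mathbb{R}))\cap C^1([0,T);H^3(\mathbb{R}))$ and let $\omega_1,\omega_2,\omega_3$ be the one-forms below built from $u$. Consider the system, for unknown functions $\Gamma(x,t)$ and $\gamma(x,t)$, $$-2\,d\Gamma=\omega_3+\omega_2-2\Gamma\omega_1+\Gamma^2(\omega_3-\omega_2),\qquad 2\,d\gamma=\omega_3-\omega_2-2\gamma\omega_1+\gamma^2(\omega_3+\omega_2).$$ Then this system is completely integrable, and for its solutions the one-forms $$\theta=\omega_1-\Gamma(\omega_3-\omega_2),\qquad \hat\theta=-\omega_1+\gamma(\omega_3+\omega_2)$$ are closed on the solutions of the Degasperis–Procesi equation.
   Context: Degasperis–Procesi equation: $u_t-u_{txx}+4uu_x=3u_xu_{xx}+uu_{xxx}$. With $m=u-u_{xx}$, $F=u_x^2-2uu_x+uu_{xx}$, real $\mu$ and a fixed sign choice (upper signs together or lower together): $\omega_1=m\,dx+F\,dt$, $\omega_2=(\mu m\pm2\sqrt{1+\mu^2})dx+\mu F\,dt$, $\omega_3=(\pm\sqrt{1+\mu^2}\,m+2\mu)dx\pm\sqrt{1+\mu^2}\,F\,dt$. On solutions these satisfy $d\omega_1=\omega_3\wedge\omega_2$, $d\omega_2=\omega_1\wedge\omega_3$, $d\omega_3=\omega_1\wedge\omega_2$. *)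

theory Defs
  imports Complex_Main
begin

text \<open>A one-form on (a subset of) the (x,t)-plane, f dx + g dt, is represented by the
  pair (f, g) of its coefficient functions, each taking arguments x and t.\<close>
type_synonym form1 = "(real \<Rightarrow> real \<Rightarrow> real) \<times> (real \<Rightarrow> real \<Rightarrow> real)"

definition form_sub :: "form1 \<Rightarrow> form1 \<Rightarrow> form1" where
  "form_sub a b = ((\<lambda>x t. fst a x t - fst b x t), (\<lambda>x t. snd a x t - snd b x t))"

definition form_add :: "form1 \<Rightarrow> form1 \<Rightarrow> form1" where
  "form_add a b = ((\<lambda>x t. fst a x t + fst b x t), (\<lambda>x t. snd a x t + snd b x t))"

definition form_fmult :: "(real \<Rightarrow> real \<Rightarrow> real) \<Rightarrow> form1 \<Rightarrow> form1" where
  "form_fmult h a = ((\<lambda>x t. h x t * fst a x t), (\<lambda>x t. h x t * snd a x t))"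

definition form_neg :: "form1 \<Rightarrow> form1" where
  "form_neg a = ((\<lambda>x t. - fst a x t), (\<lambda>x t. - snd a x t))"

text \<open>Closedness of f dx + g dt on \<real> \<times> S: d(f dx + g dt) = (g_x - f_t) dx\<and>dt = 0,
  with the partial derivatives existing (the t-derivative taken within S).\<close>
definition closed_on :: "real set \<Rightarrow> form1 \<Rightarrow> bool" where
  "closed_on S w \<longleftrightarrow> (\<forall>x. \<forall>t\<in>S. \<exists>D.
      ((\<lambda>y. snd w y t) has_real_derivative D) (at x) \<and>
      ((\<lambda>s. fst w x s) has_real_derivative D) (at t within S))"

definition dp_m :: "(real \<Rightarrow> real \<Rightarrow> real) \<Rightarrow> (real \<Rightarrow> real \<Rightarrow> real) \<Rightarrow> real \<Rightarrow> real \<Rightarrow> real" where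
  "dp_m u uxx = (\<lambda>x t. u x t - uxx x t)"

definition dp_F :: "(real \<Rightarrow> real \<Rightarrow> real) \<Rightarrow> (real \<Rightarrow> real \<Rightarrow> real) \<Rightarrow> (real \<Rightarrow> real \<Rightarrow> real)
    \<Rightarrow> real \<Rightarrow> real \<Rightarrow> real" where
  "dp_F u ux uxx = (\<lambda>x t. (ux x t)\<^sup>2 - 2 * u x t * ux x t + u x t * uxx x t)"

text \<open>The one-forms omega1, omega2, omega3 (eps = +1 / -1 encodes the sign choice).\<close>
definition omega1 :: "(real \<Rightarrow> real \<Rightarrow> real) \<Rightarrow> (real \<Rightarrow> real \<Rightarrow> real) \<Rightarrow> form1" where
  "omega1 m F = (m, F)"

definition omega2 :: "real \<Rightarrow> real \<Rightarrow> (real \<Rightarrow> real \<Rightarrow> real) \<Rightarrow> (real \<Rightarrow> real \<Rightarrow> real) \<Rightarrow> form1" where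
  "omega2 mu eps m F =
     ((\<lambda>x t. mu * m x t + 2 * eps * sqrt (1 + mu\<^sup>2)), (\<lambda>x t. mu * F x t))"

definition omega3 :: "real \<Rightarrow> real \<Rightarrow> (real \<Rightarrow> real \<Rightarrow> real) \<Rightarrow> (real \<Rightarrow> real \<Rightarrow> real) \<Rightarrow> form1" where
  "omega3 mu eps m F =
     ((\<lambda>x t. eps * sqrt (1 + mu\<^sup>2) * m x t + 2 * mu), (\<lambda>x t. eps * sqrt (1 + mu\<^sup>2) * F x t))"

text \<open>A total differential equation dG = P(x,t,G) dx + Q(x,t,G) dt is given by the pair (P,Q).
  Solutions on \<real> \<times> S:\<close>
type_synonym pfaff = "(real \<Rightarrow> real \<Rightarrow> real \<Rightarrow> real) \<times> (real \<Rightarrow> real \<Rightarrow> real \<Rightarrow> real)"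

definition pfaff_solution :: "real set \<Rightarrow> pfaff \<Rightarrow> (real \<Rightarrow> real \<Rightarrow> real) \<Rightarrow> bool" where
  "pfaff_solution S PQ G \<longleftrightarrow> (\<forall>x. \<forall>t\<in>S.
      ((\<lambda>y. G y t) has_real_derivative fst PQ x t (G x t)) (at x) \<and>
      ((\<lambda>s. G x s) has_real_derivative snd PQ x t (G x t)) (at t within S))"

text \<open>Complete integrability (Frobenius condition) of dG = P dx + Q dt on \<real> \<times> S:
  P_t + P_z Q = Q_x + Q_z P identically in (x, t, z), z the fibre variable G.\<close>
definition completely_integrable :: "real set \<Rightarrow> pfaff \<Rightarrow> bool" where
  "completely_integrable S PQ \<longleftrightarrow> (\<forall>x. \<forall>t\<in>S. \<forall>z. \<exists>Pt Pz Qx Qz.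
      ((\<lambda>s. fst PQ x s z) has_real_derivative Pt) (at t within S) \<and>
      ((\<lambda>w. fst PQ x t w) has_real_derivative Pz) (at z) \<and>
      ((\<lambda>y. snd PQ y t z) has_real_derivative Qx) (at x) \<and>
      ((\<lambda>w. snd PQ x t w) has_real_derivative Qz) (at z) \<and>
      Pt + Pz * snd PQ x t z = Qx + Qz * fst PQ x t z)"

definition riccati_Gamma :: "form1 \<Rightarrow> form1 \<Rightarrow> form1 \<Rightarrow> pfaff" where
  "riccati_Gamma w1 w2 w3 =
     ((\<lambda>x t z. - (fst w3 x t + fst w2 x t - 2 * z * fst w1 x t + z\<^sup>2 * (fst w3 x t - fst w2 x t)) / 2),
      (\<lambda>x t z. - (snd w3 x t + snd w2 x t - 2 * z * snd w1 x t + z\<^sup>2 * (snd w3 x t - snd w2 x t)) / 2))"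

definition riccati_gamma :: "form1 \<Rightarrow> form1 \<Rightarrow> form1 \<Rightarrow> pfaff" where
  "riccati_gamma w1 w2 w3 =
     ((\<lambda>x t z. (fst w3 x t - fst w2 x t - 2 * z * fst w1 x t + z\<^sup>2 * (fst w3 x t + fst w2 x t)) / 2),
      (\<lambda>x t z. (snd w3 x t - snd w2 x t - 2 * z * snd w1 x t + z\<^sup>2 * (snd w3 x t + snd w2 x t)) / 2))"

end

theory Submission
  imports Defs
begin

lemma algG:
  fixes M F mt z mu eps c :: real
  assumes "(eps * c)^2 = 1 + mu^2"
  shows "(- (eps * c * mt + mu * mt - 2 * z * mt + z\<^sup>2 * (eps * c * mt - mu * mt)) / 2)
     + (- (- 2 * M + 2 * z * (eps * c * M + 2 * mu - (mu * M + 2 * eps * c))) / 2) * (- (eps * c * F + mu * F - 2 * z * F + z\<^sup>2 * (eps * c * F - mu * F)) / 2)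
   = (- (eps * c * (mt - 2*F) + mu * (mt - 2*F) - 2 * z * (mt - 2*F) + z\<^sup>2 * (eps * c * (mt - 2*F) - mu * (mt - 2*F))) / 2)
     + (- (- 2 * F + 2 * z * (eps * c * F - mu * F)) / 2) * (- (eps * c * M + 2 * mu + (mu * M + 2 * eps * c) - 2 * z * M + z\<^sup>2 * (eps * c * M + 2 * mu - (mu * M + 2 * eps * c))) / 2)"
  using assms by algebra

lemma algg:
  fixes M F mt z mu eps c :: real
  assumes "(eps * c)^2 = 1 + mu^2"
  shows "(eps * c * mt - mu * mt - 2 * z * mt + z\<^sup>2 * (eps * c * mt + mu * mt)) / 2 + (- 2 * M + 2 * z * (eps * c * M + 2 * mu + (mu * M + 2 * eps * c))) / 2 * ((eps * c * F - mu * F - 2 * z * F + z\<^sup>2 * (eps * c * F + mu * F)) / 2) = (eps * c * (mt - 2*F) - mu * (mt - 2*F) - 2 * z * (mt - 2*F) + z\<^sup>2 * (eps * c * (mt - 2*F) + mu * (mt - 2*F))) / 2 + (- 2 * F + 2 * z * (eps * c * F + mu * F)) / 2 * ((eps * c * M + 2 * mu - (mu * M + 2 * eps * c) - 2 * z * M + z\<^sup>2 * (eps * c * M + 2 * mu + (mu * M + 2 * eps * c))) / 2)"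
  using assms by algebra

lemma closG:
  fixes M F mt Fx g mu eps c :: real
  assumes "(eps * c)^2 = 1 + mu^2" "Fx = mt - 2 * F"
  shows "mt - ((- (eps * c * F + mu * F - 2 * g * F + g\<^sup>2 * (eps * c * F - mu * F)) / 2) * (eps * c * M + 2 * mu - (mu * M + 2 * eps * c)) + g * (eps * c * mt - mu * mt))
       = Fx - ((- (eps * c * M + 2 * mu + (mu * M + 2 * eps * c) - 2 * g * M + g\<^sup>2 * (eps * c * M + 2 * mu - (mu * M + 2 * eps * c))) / 2) * (eps * c * F - mu * F) + g * (eps * c * Fx - mu * Fx))"
  using assms by algebra

lemma closg:
  fixes M F mt Fx g mu eps c :: real
  assumes "(eps * c)^2 = 1 + mu^2" "Fx = mt - 2 * F"
  shows "- mt + (((eps * c * F - mu * F - 2 * g * F + g\<^sup>2 * (eps * c * F + mu * F)) / 2) * (eps * c * M + 2 * mu + (mu * M + 2 * eps * c)) + g * (eps * c * mt + mu * mt))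
       = - Fx + (((eps * c * M + 2 * mu - (mu * M + 2 * eps * c) - 2 * g * M + g\<^sup>2 * (eps * c * M + 2 * mu + (mu * M + 2 * eps * c))) / 2) * (eps * c * F + mu * F) + g * (eps * c * Fx + mu * Fx))"
  using assms by algebra

theorem proposition8p1:
  fixes u ux uxx uxxx ut utx utxx :: "real \<Rightarrow> real \<Rightarrow> real"
    and T mu eps :: real
  defines "S \<equiv> {0..<T}"
  defines "w1 \<equiv> omega1 (dp_m u uxx) (dp_F u ux uxx)"
      and "w2 \<equiv> omega2 mu eps (dp_m u uxx) (dp_F u ux uxx)"
      and "w3 \<equiv> omega3 mu eps (dp_m u uxx) (dp_F u ux uxx)"
  assumes eps: "eps = 1 \<or> eps = -1"
    and u_x:   "\<And>x t. t \<in> S \<Longrightarrow> ((\<lambda>y. u y t) has_real_derivative ux x t) (at x)"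
    and u_xx:  "\<And>x t. t \<in> S \<Longrightarrow> ((\<lambda>y. ux y t) has_real_derivative uxx x t) (at x)"
    and u_xxx: "\<And>x t. t \<in> S \<Longrightarrow> ((\<lambda>y. uxx y t) has_real_derivative uxxx x t) (at x)"
    and u_t:   "\<And>x t. t \<in> S \<Longrightarrow> ((\<lambda>s. u x s) has_real_derivative ut x t) (at t within S)"
    and u_tx:  "\<And>x t. t \<in> S \<Longrightarrow> ((\<lambda>y. ut y t) has_real_derivative utx x t) (at x)"
    and u_txx: "\<And>x t. t \<in> S \<Longrightarrow> ((\<lambda>y. utx y t) has_real_derivative utxx x t) (at x)"
    and u_xxt: "\<And>x t. t \<in> S \<Longrightarrow> ((\<lambda>s. uxx x s) has_real_derivative utxx x t) (at t within S)"
    and DP: "\<And>x t. t \<in> S \<Longrightarrow>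
       ut x t - utxx x t + 4 * u x t * ux x t = 3 * ux x t * uxx x t + u x t * uxxx x t"
  shows "completely_integrable S (riccati_Gamma w1 w2 w3)
       \<and> completely_integrable S (riccati_gamma w1 w2 w3)
       \<and> (\<forall>G. pfaff_solution S (riccati_Gamma w1 w2 w3) G \<longrightarrow>
              closed_on S (form_sub w1 (form_fmult G (form_sub w3 w2))))
       \<and> (\<forall>g. pfaff_solution S (riccati_gamma w1 w2 w3) g \<longrightarrow>
              closed_on S (form_add (form_neg w1) (form_fmult g (form_add w3 w2))))"
proof -
  define c where "c = sqrt (1 + mu\<^sup>2)"
  define M where "M = dp_m u uxx"
  define F where "F = dp_F u ux uxx"
  define mt where "mt = (\<lambda>x t. ut x t - utxx x t)"
  define Fx where "Fx = (\<lambda>x t. 2 * ux x t * uxx x t - 2 * (ux x t * ux x t + u x t * uxx x t)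
      + ux x t * uxx x t + u x t * uxxx x t)"
  have s2: "(eps * c)\<^sup>2 = 1 + mu\<^sup>2" using eps by (auto simp: c_def power_mult_distrib)
  have hM: "((\<lambda>s. M x s) has_real_derivative mt x t) (at t within S)" if "t \<in> S" for x t
    unfolding M_def dp_m_def mt_def
    by (intro derivative_intros u_t[OF that] u_xxt[OF that])
  have hF: "((\<lambda>y. F y t) has_real_derivative Fx x t) (at x)" if "t \<in> S" for x t
    unfolding F_def dp_F_def Fx_def
    by (auto intro!: derivative_eq_intros u_x[OF that] u_xx[OF that] u_xxx[OF that]
        simp: algebra_simps power2_eq_square)
  have key: "Fx x t = mt x t - 2 * F x t" if "t \<in> S" for x t
    using DP[OF that] unfolding Fx_def mt_def F_def dp_F_def by (simp add: algebra_simps power2_eq_square)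
  have w: "w1 = (M, F)" "w2 = ((\<lambda>x t. mu * M x t + 2 * eps * c), (\<lambda>x t. mu * F x t))"
      "w3 = ((\<lambda>x t. eps * c * M x t + 2 * mu), (\<lambda>x t. eps * c * F x t))"
    unfolding w1_def w2_def w3_def omega1_def omega2_def omega3_def M_def F_def c_def by auto
  have CI1: "completely_integrable S (riccati_Gamma w1 w2 w3)"
    unfolding completely_integrable_def riccati_Gamma_def w fst_conv snd_conv
  proof (intro allI ballI)
    fix x t z assume t: "t \<in> S"
    let ?s = "eps * c"
    show "\<exists>Pt Pz Qx Qz.
      ((\<lambda>s. - (?s * M x s + 2 * mu + (mu * M x s + 2 * eps * c) - 2 * z * M x s + z\<^sup>2 * (?s * M x s + 2 * mu - (mu * M x s + 2 * eps * c))) / 2) has_real_derivative Pt) (at t within S) \<and>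
      ((\<lambda>w. - (?s * M x t + 2 * mu + (mu * M x t + 2 * eps * c) - 2 * w * M x t + w\<^sup>2 * (?s * M x t + 2 * mu - (mu * M x t + 2 * eps * c))) / 2) has_real_derivative Pz) (at z) \<and>
      ((\<lambda>y. - (?s * F y t + mu * F y t - 2 * z * F y t + z\<^sup>2 * (?s * F y t - mu * F y t)) / 2) has_real_derivative Qx) (at x) \<and>
      ((\<lambda>w. - (?s * F x t + mu * F x t - 2 * w * F x t + w\<^sup>2 * (?s * F x t - mu * F x t)) / 2) has_real_derivative Qz) (at z) \<and>
      Pt + Pz * (- (?s * F x t + mu * F x t - 2 * z * F x t + z\<^sup>2 * (?s * F x t - mu * F x t)) / 2) =
      Qx + Qz * (- (?s * M x t + 2 * mu + (mu * M x t + 2 * eps * c) - 2 * z * M x t + z\<^sup>2 * (?s * M x t + 2 * mu - (mu * M x t + 2 * eps * c))) / 2)"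
    proof (intro exI conjI)
      show "((\<lambda>s. - (?s * M x s + 2 * mu + (mu * M x s + 2 * eps * c) - 2 * z * M x s + z\<^sup>2 * (?s * M x s + 2 * mu - (mu * M x s + 2 * eps * c))) / 2) has_real_derivative
         (- (?s * mt x t + mu * mt x t - 2 * z * mt x t + z\<^sup>2 * (?s * mt x t - mu * mt x t)) / 2)) (at t within S)"
        by (auto intro!: derivative_eq_intros hM[OF t] simp: field_simps)
      show "((\<lambda>w. - (?s * M x t + 2 * mu + (mu * M x t + 2 * eps * c) - 2 * w * M x t + w\<^sup>2 * (?s * M x t + 2 * mu - (mu * M x t + 2 * eps * c))) / 2) has_real_derivative
         (- (- 2 * M x t + 2 * z * (?s * M x t + 2 * mu - (mu * M x t + 2 * eps * c))) / 2)) (at z)"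
        by (auto intro!: derivative_eq_intros simp: field_simps)
      show "((\<lambda>y. - (?s * F y t + mu * F y t - 2 * z * F y t + z\<^sup>2 * (?s * F y t - mu * F y t)) / 2) has_real_derivative
         (- (?s * Fx x t + mu * Fx x t - 2 * z * Fx x t + z\<^sup>2 * (?s * Fx x t - mu * Fx x t)) / 2)) (at x)"
        by (auto intro!: derivative_eq_intros hF[OF t] simp: field_simps)
      show "((\<lambda>w. - (?s * F x t + mu * F x t - 2 * w * F x t + w\<^sup>2 * (?s * F x t - mu * F x t)) / 2) has_real_derivative
         (- (- 2 * F x t + 2 * z * (?s * F x t - mu * F x t)) / 2)) (at z)"
        by (auto intro!: derivative_eq_intros simp: field_simps)
    qed (unfold key[OF t], rule algG[OF s2])
  qed
  have CI2: "completely_integrable S (riccati_gamma w1 w2 w3)"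
    unfolding completely_integrable_def riccati_gamma_def w fst_conv snd_conv
  proof (intro allI ballI)
    fix x t z assume t: "t \<in> S"
    have d1: "((\<lambda>s. (eps * c * M x s + 2 * mu - (mu * M x s + 2 * eps * c) - 2 * z * M x s + z\<^sup>2 * (eps * c * M x s + 2 * mu + (mu * M x s + 2 * eps * c))) / 2) has_real_derivative ((eps * c * mt x t - mu * mt x t - 2 * z * mt x t + z\<^sup>2 * (eps * c * mt x t + mu * mt x t)) / 2)) (at t within S)"
      by (auto intro!: derivative_eq_intros hM[OF t] simp: field_simps)
    have d2: "((\<lambda>w. (eps * c * M x t + 2 * mu - (mu * M x t + 2 * eps * c) - 2 * w * M x t + w\<^sup>2 * (eps * c * M x t + 2 * mu + (mu * M x t + 2 * eps * c))) / 2) has_real_derivative ((- 2 * M x t + 2 * z * (eps * c * M x t + 2 * mu + (mu * M x t + 2 * eps * c))) / 2)) (at z)"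
      by (auto intro!: derivative_eq_intros simp: field_simps)
    have d3: "((\<lambda>y. (eps * c * F y t - mu * F y t - 2 * z * F y t + z\<^sup>2 * (eps * c * F y t + mu * F y t)) / 2) has_real_derivative ((eps * c * Fx x t - mu * Fx x t - 2 * z * Fx x t + z\<^sup>2 * (eps * c * Fx x t + mu * Fx x t)) / 2)) (at x)"
      by (auto intro!: derivative_eq_intros hF[OF t] simp: field_simps)
    have d4: "((\<lambda>w. (eps * c * F x t - mu * F x t - 2 * w * F x t + w\<^sup>2 * (eps * c * F x t + mu * F x t)) / 2) has_real_derivative ((- 2 * F x t + 2 * z * (eps * c * F x t + mu * F x t)) / 2)) (at z)"
      by (auto intro!: derivative_eq_intros simp: field_simps)
    have e: "(eps * c * mt x t - mu * mt x t - 2 * z * mt x t + z\<^sup>2 * (eps * c * mt x t + mu * mt x t)) / 2 + ((- 2 * M x t + 2 * z * (eps * c * M x t + 2 * mu + (mu * M x t + 2 * eps * c))) / 2) * ((eps * c * F x t - mu * F x t - 2 * z * F x t + z\<^sup>2 * (eps * c * F x t + mu * F x t)) / 2)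
       = (eps * c * Fx x t - mu * Fx x t - 2 * z * Fx x t + z\<^sup>2 * (eps * c * Fx x t + mu * Fx x t)) / 2 + ((- 2 * F x t + 2 * z * (eps * c * F x t + mu * F x t)) / 2) * ((eps * c * M x t + 2 * mu - (mu * M x t + 2 * eps * c) - 2 * z * M x t + z\<^sup>2 * (eps * c * M x t + 2 * mu + (mu * M x t + 2 * eps * c))) / 2)"
      unfolding key[OF t] by (rule algg[OF s2])
    show "\<exists>Pt Pz Qx Qz.
      ((\<lambda>s. (eps * c * M x s + 2 * mu - (mu * M x s + 2 * eps * c) - 2 * z * M x s + z\<^sup>2 * (eps * c * M x s + 2 * mu + (mu * M x s + 2 * eps * c))) / 2) has_real_derivative Pt) (at t within S) \<and>
      ((\<lambda>w. (eps * c * M x t + 2 * mu - (mu * M x t + 2 * eps * c) - 2 * w * M x t + w\<^sup>2 * (eps * c * M x t + 2 * mu + (mu * M x t + 2 * eps * c))) / 2) has_real_derivative Pz) (at z) \<and>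
      ((\<lambda>y. (eps * c * F y t - mu * F y t - 2 * z * F y t + z\<^sup>2 * (eps * c * F y t + mu * F y t)) / 2) has_real_derivative Qx) (at x) \<and>
      ((\<lambda>w. (eps * c * F x t - mu * F x t - 2 * w * F x t + w\<^sup>2 * (eps * c * F x t + mu * F x t)) / 2) has_real_derivative Qz) (at z) \<and>
      Pt + Pz * ((eps * c * F x t - mu * F x t - 2 * z * F x t + z\<^sup>2 * (eps * c * F x t + mu * F x t)) / 2) = Qx + Qz * ((eps * c * M x t + 2 * mu - (mu * M x t + 2 * eps * c) - 2 * z * M x t + z\<^sup>2 * (eps * c * M x t + 2 * mu + (mu * M x t + 2 * eps * c))) / 2)"
      using d1 d2 d3 d4 e by blast
  qed
  have CL1: "closed_on S (form_sub w1 (form_fmult G (form_sub w3 w2)))"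
    if sol: "pfaff_solution S (riccati_Gamma w1 w2 w3) G" for G
    unfolding closed_on_def form_sub_def form_fmult_def w fst_conv snd_conv
  proof (intro allI ballI)
    fix x t assume t: "t \<in> S"
    have Gx: "((\<lambda>y. G y t) has_real_derivative (- (eps * c * M x t + 2 * mu + (mu * M x t + 2 * eps * c) - 2 * G x t * M x t + (G x t)\<^sup>2 * (eps * c * M x t + 2 * mu - (mu * M x t + 2 * eps * c))) / 2)) (at x)"
     and Gt: "((\<lambda>s. G x s) has_real_derivative (- (eps * c * F x t + mu * F x t - 2 * G x t * F x t + (G x t)\<^sup>2 * (eps * c * F x t - mu * F x t)) / 2)) (at t within S)"
      using sol t unfolding pfaff_solution_def riccati_Gamma_def w fst_conv snd_conv by blast+
    have d1: "((\<lambda>y. F y t - G y t * (eps * c * F y t - mu * F y t)) has_real_derivative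
       (Fx x t - ((- (eps * c * M x t + 2 * mu + (mu * M x t + 2 * eps * c) - 2 * G x t * M x t + (G x t)\<^sup>2 * (eps * c * M x t + 2 * mu - (mu * M x t + 2 * eps * c))) / 2) * (eps * c * F x t - mu * F x t) + G x t * (eps * c * Fx x t - mu * Fx x t)))) (at x)"
      by (rule DERIV_cong[OF DERIV_diff[OF hF[OF t] DERIV_mult[OF Gx DERIV_diff[OF DERIV_cmult[OF hF[OF t]] DERIV_cmult[OF hF[OF t]]]]]]) algebra
    have d2: "((\<lambda>s. M x s - G x s * (eps * c * M x s + 2 * mu - (mu * M x s + 2 * eps * c))) has_real_derivative
       (mt x t - ((- (eps * c * F x t + mu * F x t - 2 * G x t * F x t + (G x t)\<^sup>2 * (eps * c * F x t - mu * F x t)) / 2) * (eps * c * M x t + 2 * mu - (mu * M x t + 2 * eps * c)) + G x t * (eps * c * mt x t - mu * mt x t)))) (at t within S)"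
      by (rule DERIV_cong[OF DERIV_diff[OF hM[OF t] DERIV_mult[OF Gt DERIV_diff[OF DERIV_add[OF DERIV_cmult[OF hM[OF t]] DERIV_const] DERIV_add[OF DERIV_cmult[OF hM[OF t]] DERIV_const]]]]]) algebra
    have e: "mt x t - ((- (eps * c * F x t + mu * F x t - 2 * G x t * F x t + (G x t)\<^sup>2 * (eps * c * F x t - mu * F x t)) / 2) * (eps * c * M x t + 2 * mu - (mu * M x t + 2 * eps * c)) + G x t * (eps * c * mt x t - mu * mt x t))
       = Fx x t - ((- (eps * c * M x t + 2 * mu + (mu * M x t + 2 * eps * c) - 2 * G x t * M x t + (G x t)\<^sup>2 * (eps * c * M x t + 2 * mu - (mu * M x t + 2 * eps * c))) / 2) * (eps * c * F x t - mu * F x t) + G x t * (eps * c * Fx x t - mu * Fx x t))"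
      by (rule closG[OF s2 key[OF t]])
    show "\<exists>D. ((\<lambda>y. F y t - G y t * (eps * c * F y t - mu * F y t)) has_real_derivative D) (at x) \<and>
       ((\<lambda>s. M x s - G x s * (eps * c * M x s + 2 * mu - (mu * M x s + 2 * eps * c))) has_real_derivative D) (at t within S)"
      using d1 d2[unfolded e] by blast
  qed
  have CL2: "closed_on S (form_add (form_neg w1) (form_fmult g (form_add w3 w2)))"
    if sol: "pfaff_solution S (riccati_gamma w1 w2 w3) g" for g
    unfolding closed_on_def form_add_def form_neg_def form_fmult_def w fst_conv snd_conv
  proof (intro allI ballI)
    fix x t assume t: "t \<in> S"
    have Gx: "((\<lambda>y. g y t) has_real_derivative ((eps * c * M x t + 2 * mu - (mu * M x t + 2 * eps * c) - 2 * g x t * M x t + (g x t)\<^sup>2 * (eps * c * M x t + 2 * mu + (mu * M x t + 2 * eps * c))) / 2)) (at x)"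
     and Gt: "((\<lambda>s. g x s) has_real_derivative ((eps * c * F x t - mu * F x t - 2 * g x t * F x t + (g x t)\<^sup>2 * (eps * c * F x t + mu * F x t)) / 2)) (at t within S)"
      using sol t unfolding pfaff_solution_def riccati_gamma_def w fst_conv snd_conv by blast+
    have d1: "((\<lambda>y. - F y t + g y t * (eps * c * F y t + mu * F y t)) has_real_derivative
       (- Fx x t + (((eps * c * M x t + 2 * mu - (mu * M x t + 2 * eps * c) - 2 * g x t * M x t + (g x t)\<^sup>2 * (eps * c * M x t + 2 * mu + (mu * M x t + 2 * eps * c))) / 2) * (eps * c * F x t + mu * F x t) + g x t * (eps * c * Fx x t + mu * Fx x t)))) (at x)"
      by (rule DERIV_cong[OF DERIV_add[OF DERIV_minus[OF hF[OF t]] DERIV_mult[OF Gx DERIV_add[OF DERIV_cmult[OF hF[OF t]] DERIV_cmult[OF hF[OF t]]]]]]) algebra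
    have d2: "((\<lambda>s. - M x s + g x s * (eps * c * M x s + 2 * mu + (mu * M x s + 2 * eps * c))) has_real_derivative
       (- mt x t + (((eps * c * F x t - mu * F x t - 2 * g x t * F x t + (g x t)\<^sup>2 * (eps * c * F x t + mu * F x t)) / 2) * (eps * c * M x t + 2 * mu + (mu * M x t + 2 * eps * c)) + g x t * (eps * c * mt x t + mu * mt x t)))) (at t within S)"
      by (rule DERIV_cong[OF DERIV_add[OF DERIV_minus[OF hM[OF t]] DERIV_mult[OF Gt DERIV_add[OF DERIV_add[OF DERIV_cmult[OF hM[OF t]] DERIV_const] DERIV_add[OF DERIV_cmult[OF hM[OF t]] DERIV_const]]]]]) algebra
    have e: "- mt x t + (((eps * c * F x t - mu * F x t - 2 * g x t * F x t + (g x t)\<^sup>2 * (eps * c * F x t + mu * F x t)) / 2) * (eps * c * M x t + 2 * mu + (mu * M x t + 2 * eps * c)) + g x t * (eps * c * mt x t + mu * mt x t))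
       = - Fx x t + (((eps * c * M x t + 2 * mu - (mu * M x t + 2 * eps * c) - 2 * g x t * M x t + (g x t)\<^sup>2 * (eps * c * M x t + 2 * mu + (mu * M x t + 2 * eps * c))) / 2) * (eps * c * F x t + mu * F x t) + g x t * (eps * c * Fx x t + mu * Fx x t))"
      by (rule closg[OF s2 key[OF t]])
    show "\<exists>D. ((\<lambda>y. - F y t + g y t * (eps * c * F y t + mu * F y t)) has_real_derivative D) (at x) \<and>
       ((\<lambda>s. - M x s + g x s * (eps * c * M x s + 2 * mu + (mu * M x s + 2 * eps * c))) has_real_derivative D) (at t within S)"
      using d1 d2[unfolded e] by blast
  qed
  show ?thesis using CI1 CI2 CL1 CL2 by blast
qed

end
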